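(* (1) If $t\ge2$ and $\mu_B(t)\le u\le1$, then $\mathfrak{e}^B_{t,u}\in\mathcal{E}(\mathcal{P}^{s+}_{3,5})$. (2) If $t\ge2$, $\mu_B(t)\le u<1$ and $f\in\mathcal{P}^{s+}_{3,5}$ satisfies $f(t,1,1)=f(0,u,1)=f_b(0,u,1)=0$, then $f=\lambda\mathfrak{e}^B_{t,u}$ for some $\lambda\ge0$. (3) If $t\ge2$ and $f\in\mathcal{P}^{s+}_{3,5}$ satisfies $f(t,1,1)=f(0,1,1)=f_{bb}(0,1,1)=0$, then $f=\lambda\mathfrak{e}^B_{t,1}$ for some $\lambda\ge0$. (4) $\mathfrak{e}^B_{2,1}=\mathfrak{e}^C_2$.
   Context: Let $a,b,c$ be variables. For nonnegative integers $m,n$ put $S_{m,n}=a^mb^n+b^mc^n+c^ma^n$, $S_n=S_{n,0}=a^n+b^n+c^n$, $T_{m,n}=S_{m,n}+S_{n,m}$, $U=abc$ (so $S_{1,1}=ab+bc+ca$). Let $\mathcal{H}^s_{3,5}$ be the real vector space of symmetric homogeneous polynomials of degree 5 in $\mathbb{R}[a,b,c]$; it has basis $s_0=S_5-US_{1,1}$, $s_1=T_{4,1}-2US_{1,1}$, $s_2=T_{3,2}-2US_{1,1}$, $s_3=US_2-US_{1,1}$, $s_4=US_{1,1}$. Let $\mathcal{P}^{s+}_{3,5}=\{f\in\mathcal{H}^s_{3,5}: f(a,b,c)\ge 0\text{ for all }a,b,c\ge0\}$. For a closed convex cone $\mathcal{P}$, an element $f\in\mathcal{P}\setminus\{0\}$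 is extremal if whenever $f=g+h$ with $g,h\in\mathcal{P}$ we have $g,h\in\mathbb{R}_{\ge0}f$; $\mathcal{E}(\mathcal{P})$ is the set of extremal elements. $f_b=\partial f/\partial b$, $f_{bb}=\partial^2f/\partial b^2$. Auxiliary functions: $\mu_R(t)=2-t^2+t\sqrt{(t-1)(t+2)}$, $\mu_B(t)=\tfrac12\big(\mu_R(t)-\sqrt{\mu_R(t)^2-4}\big)$ (for $t\ge2$), $\omega(u)=u+\frac1u-2$. Family B: with $p^B_1(t,w)=-2w-3$, $p^B_2(t,w)=w^2+2w+2$, $p^B_3(t,w)=-\frac{2t^3+4t^2+5t+1}{t^2(t+2)}w^2+\frac{2(4t^2+5t+3)}{t+2}w-\frac{3t^3-7t^2-12t-8}{t+2}$, $p^B_4(t,w)=\frac{(t-1)^3(-w^2-2t^2w+t^2(t-2))}{t^2(t+2)}$, put $\mathfrak{e}^B_{t,u}=s_0+\sum_{i=1}^4p^B_i(t,\omega(u))s_i$. Family C: $\mathfrak{e}^C_t=s_0-(t+1)s_1+ts_2+(t+1)^2s_3$. *)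

theory Defs
  imports "HOL-Analysis.Analysis"
begin

type_synonym form3 = "real \<Rightarrow> real \<Rightarrow> real \<Rightarrow> real"

definition Smn :: "nat \<Rightarrow> nat \<Rightarrow> form3" where
  "Smn m n a b c = a^m * b^n + b^m * c^n + c^m * a^n"

definition Sn :: "nat \<Rightarrow> form3" where
  "Sn n = Smn n 0"

definition Tmn :: "nat \<Rightarrow> nat \<Rightarrow> form3" where
  "Tmn m n a b c = Smn m n a b c + Smn n m a b c"

definition U :: form3 where
  "U a b c = a * b * c"

definition sb :: "nat \<Rightarrow> form3" where
  "sb i a b c =
     (if i = 0 then Sn 5 a b c - U a b c * Smn 1 1 a b c
      else if i = 1 then Tmn 4 1 a b c - 2 * U a b c * Smn 1 1 a b c
      else if i = 2 then Tmn 3 2 a b c - 2 * U a b c * Smn 1 1 a b c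
      else if i = 3 then U a b c * Sn 2 a b c - U a b c * Smn 1 1 a b c
      else U a b c * Smn 1 1 a b c)"

definition form_of :: "(nat \<Rightarrow> real) \<Rightarrow> form3" where
  "form_of x a b c = (\<Sum>i<5. x i * sb i a b c)"

definition H35 :: "form3 set" where
  "H35 = range form_of"

definition P35 :: "form3 set" where
  "P35 = {f \<in> H35. \<forall>a b c. a \<ge> 0 \<longrightarrow> b \<ge> 0 \<longrightarrow> c \<ge> 0 \<longrightarrow> f a b c \<ge> 0}"

definition scal :: "real \<Rightarrow> form3 \<Rightarrow> form3" where
  "scal l f = (\<lambda>a b c. l * f a b c)"

definition extremal :: "form3 set \<Rightarrow> form3 \<Rightarrow> bool" where
  "extremal P f \<longleftrightarrow> f \<in> P \<and> f \<noteq> (\<lambda>a b c. 0) \<and>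
     (\<forall>g h. g \<in> P \<longrightarrow> h \<in> P \<longrightarrow> f = (\<lambda>a b c. g a b c + h a b c) \<longrightarrow>
        (\<exists>l\<ge>0. g = scal l f) \<and> (\<exists>l\<ge>0. h = scal l f))"

definition muR :: "real \<Rightarrow> real" where
  "muR t = 2 - t^2 + t * sqrt ((t - 1) * (t + 2))"

definition muB :: "real \<Rightarrow> real" where
  "muB t = (muR t - sqrt (muR t ^ 2 - 4)) / 2"

definition omega :: "real \<Rightarrow> real" where
  "omega u = u + 1 / u - 2"

definition pB :: "nat \<Rightarrow> real \<Rightarrow> real \<Rightarrow> real" where
  "pB i t w =
     (if i = 1 then -2 * w - 3
      else if i = 2 then w^2 + 2 * w + 2
      else if i = 3 then
        - (2*t^3 + 4*t^2 + 5*t + 1) / (t^2 * (t + 2)) * w^2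
        + 2 * (4*t^2 + 5*t + 3) / (t + 2) * w
        - (3*t^3 - 7*t^2 - 12*t - 8) / (t + 2)
      else (t - 1)^3 * (- (w^2) - 2 * t^2 * w + t^2 * (t - 2)) / (t^2 * (t + 2)))"

definition eB :: "real \<Rightarrow> real \<Rightarrow> form3" where
  "eB t u a b c = sb 0 a b c + (\<Sum>i\<in>{1..4}. pB i t (omega u) * sb i a b c)"

definition eC :: "real \<Rightarrow> form3" where
  "eC t a b c = sb 0 a b c - (t + 1) * sb 1 a b c + t * sb 2 a b c + (t + 1)^2 * sb 3 a b c"

end

theory Submission
  imports Defs
begin


definition GG :: "nat \<Rightarrow> real \<Rightarrow> real \<Rightarrow> real" where
  "GG i p q = (if i = 0 then p^5 - 5*p^3*q + 5*p*q^2 else if i = 1 then p^3*q - 3*p*q^2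
     else if i = 2 then p*q^2 else 0)"
definition HH :: "nat \<Rightarrow> real \<Rightarrow> real \<Rightarrow> real" where
  "HH i p q = (if i = 0 then 5*p^2 - 6*q else if i = 1 then 3*q - p^2
     else if i = 2 then -2*p^2 - 3*q else if i = 3 then p^2 - 3*q else q)"

lemma sb0: "sb 0 a b c = GG 0 (a+b+c) (a*b+b*c+c*a) + (a*b*c) * HH 0 (a+b+c) (a*b+b*c+c*a)"
  by (simp add: sb_def GG_def HH_def Sn_def Tmn_def Smn_def U_def; algebra)
lemma sb1: "sb 1 a b c = GG 1 (a+b+c) (a*b+b*c+c*a) + (a*b*c) * HH 1 (a+b+c) (a*b+b*c+c*a)"
  by (simp add: sb_def GG_def HH_def Sn_def Tmn_def Smn_def U_def; algebra)
lemma sb2: "sb 2 a b c = GG 2 (a+b+c) (a*b+b*c+c*a) + (a*b*c) * HH 2 (a+b+c) (a*b+b*c+c*a)"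
  by (simp add: sb_def GG_def HH_def Sn_def Tmn_def Smn_def U_def; algebra)
lemma sb3: "sb 3 a b c = GG 3 (a+b+c) (a*b+b*c+c*a) + (a*b*c) * HH 3 (a+b+c) (a*b+b*c+c*a)"
  by (simp add: sb_def GG_def HH_def Sn_def Tmn_def Smn_def U_def; algebra)
lemma sb4: "i \<ge> 4 \<Longrightarrow> sb i a b c = GG i (a+b+c) (a*b+b*c+c*a) + (a*b*c) * HH i (a+b+c) (a*b+b*c+c*a)"
  by (simp add: sb_def GG_def HH_def Sn_def Tmn_def Smn_def U_def; algebra)

lemma sb_pqr: "sb i a b c = GG i (a+b+c) (a*b+b*c+c*a) + (a*b*c) * HH i (a+b+c) (a*b+b*c+c*a)"
proof -
  consider "i = 0" | "i = 1" | "i = 2" | "i = 3" | "i \<ge> 4" by linarith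
  then show ?thesis using sb0 sb1 sb2 sb3 sb4 by cases auto
qed

definition GX :: "(nat \<Rightarrow> real) \<Rightarrow> real \<Rightarrow> real \<Rightarrow> real" where
  "GX x p q = (\<Sum>i<5. x i * GG i p q)"
definition HX :: "(nat \<Rightarrow> real) \<Rightarrow> real \<Rightarrow> real \<Rightarrow> real" where
  "HX x p q = (\<Sum>i<5. x i * HH i p q)"

lemma form_pqr: "form_of x a b c = GX x (a+b+c) (a*b+b*c+c*a) + (a*b*c) * HX x (a+b+c) (a*b+b*c+c*a)"
  unfolding form_of_def GX_def HX_def sb_pqr
  by (simp add: sum_distrib_left sum.distrib algebra_simps)

lemma GG_hom: "GG i (k*p) (k^2*q) = k^5 * GG i p q"
  unfolding GG_def by (simp add: power_mult_distrib algebra_simps) (auto simp: numeral_eq_Suc)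
lemma HH_hom: "HH i (k*p) (k^2*q) = k^2 * HH i p q"
  unfolding HH_def by (simp add: power_mult_distrib algebra_simps)
lemma GX_hom: "GX x (k*p) (k^2*q) = k^5 * GX x p q"
  unfolding GX_def GG_hom sum_distrib_left by (simp add: mult_ac)
lemma HX_hom: "HX x (k*p) (k^2*q) = k^2 * HX x p q"
  unfolding HX_def HH_hom sum_distrib_left by (simp add: mult_ac)

lemma form_hom: "form_of x (k*a) (k*b) (k*c) = k^5 * form_of x a b c"
proof -
  have e1: "k*a+k*b+k*c = k*(a+b+c)" by algebra
  have e2: "k*a*(k*b)+k*b*(k*c)+k*c*(k*a) = k^2*(a*b+b*c+c*a)" by algebra
  show ?thesis unfolding form_pqr e1 e2 GX_hom HX_hom by algebra
qed

lemma interp: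
  fixes G H r0 r1 r :: real
  assumes "0 \<le> G + r0*H" "0 \<le> G + r1*H" "r0 \<le> r" "r \<le> r1"
  shows "0 \<le> G + r*H"
proof (cases "H \<ge> 0")
  case True
  then have "r0*H \<le> r*H" using assms by (simp add: mult_right_mono)
  then show ?thesis using assms by linarith
next
  case False
  then have "r1*H \<le> r*H" using assms by (simp add: mult_right_mono_neg)
  then show ?thesis using assms by linarith
qed

lemma test_set:
  assumes A1: "\<And>z. z \<ge> 0 \<Longrightarrow> form_of x z 1 1 \<ge> 0"
    and A2: "\<And>z. z \<ge> 0 \<Longrightarrow> form_of x 0 z 1 \<ge> 0"
    and A3: "form_of x 1 0 0 \<ge> 0"
    and abc: "a \<ge> 0" "b \<ge> 0" "c \<ge> 0"
  shows "form_of x a b c \<ge> 0"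
proof -
  have B0: "form_of x z 0 0 \<ge> 0" if "z \<ge> 0" for z
    using form_hom[of x z 1 0 0] A3 that by simp
  have B1: "form_of x z y y \<ge> 0" if "z \<ge> 0" "y \<ge> 0" for z y
  proof (cases "y = 0")
    case True then show ?thesis using B0 that by simp
  next
    case False
    then have "form_of x z y y = y^5 * form_of x (z/y) 1 1"
      using form_hom[of x y "z/y" 1 1] by simp
    then show ?thesis using A1[of "z/y"] that by simp
  qed
  have B2: "form_of x 0 y z \<ge> 0" if "z \<ge> 0" "y \<ge> 0" for z y
  proof (cases "z = 0")
    case True
    have "form_of x 0 y 0 = form_of x y 0 0" unfolding form_pqr by simp
    then show ?thesis using B0 that True by simp
  next
    case False
    then have "form_of x 0 y z = z^5 * form_of x 0 (y/z) 1"
      using form_hom[of x z 0 "y/z" 1] by simp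
    then show ?thesis using A2[of "y/z"] that by simp
  qed
  define p where "p = a+b+c"
  define q where "q = a*b+b*c+c*a"
  define r where "r = a*b*c"
  have fpqr: "form_of x a b c = GX x p q + r * HX x p q" unfolding p_def q_def r_def form_pqr ..
  have p0: "p \<ge> 0" "q \<ge> 0" "r \<ge> 0" using abc unfolding p_def q_def r_def by auto
  have D0: "p^2 - 3*q = ((a-b)^2+(b-c)^2+(c-a)^2)/2" unfolding p_def q_def by algebra
  have D1: "p^2 - 3*q \<ge> 0" unfolding D0 by simp
  define s where "s = sqrt (p^2 - 3*q)"
  have s0: "s \<ge> 0" and s2: "s^2 = p^2 - 3*q" using D1 unfolding s_def by auto
  have sp: "s \<le> p"
  proof -
    have "s^2 \<le> p^2" using s2 p0 by simp
    then show ?thesis using power2_le_imp_le p0 by blast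
  qed
  define X1 where "X1 = (p+2 * s)/3"
  define Y1 where "Y1 = (p-s)/3"
  define X2 where "X2 = (p-2 * s)/3"
  define Y2 where "Y2 = (p+s)/3"
  define r1 where "r1 = X1*Y1*Y1"
  define r2 where "r2 = X2*Y2*Y2"
  have F1: "GX x p q + r1 * HX x p q \<ge> 0"
  proof -
    have "X1+Y1+Y1 = p" unfolding X1_def Y1_def by (simp add: field_simps)
    moreover have "X1*Y1+Y1*Y1+Y1*X1 = q" unfolding X1_def Y1_def using s2 by (simp add: field_simps; algebra)
    moreover have "X1 \<ge> 0" "Y1 \<ge> 0" unfolding X1_def Y1_def using s0 sp by auto
    ultimately show ?thesis using B1[of X1 Y1] unfolding form_pqr r1_def by simp
  qed
  have Delta: "(a-b)^2*(b-c)^2*(c-a)^2 = -27*(r-r1)*(r-r2)"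
    using s2 unfolding r1_def r2_def X1_def Y1_def X2_def Y2_def p_def q_def r_def by (simp add: field_simps; algebra)
  have r12: "r1 - r2 = 4 * s^3/27"
    unfolding r1_def r2_def X1_def Y1_def X2_def Y2_def by (simp add: field_simps; algebra)
  have "(r-r1)*(r-r2) \<le> 0"
  proof -
    have "0 \<le> (a-b)^2*(b-c)^2*(c-a)^2" by simp
    hence "0 \<le> -27*((r-r1)*(r-r2))" unfolding Delta by (simp only: mult.assoc)
    thus ?thesis by linarith
  qed
  moreover have "r2 \<le> r1"
  proof -
    have "0 \<le> s^3" using s0 by simp
    then show ?thesis using r12 by linarith
  qed
  ultimately have rr: "r2 \<le> r" "r \<le> r1" by (smt (verit) mult_le_0_iff)+
  show ?thesis
  proof (cases "2 * s \<le> p")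
    case True
    have F2: "GX x p q + r2 * HX x p q \<ge> 0"
    proof -
      have "X2+Y2+Y2 = p" unfolding X2_def Y2_def by (simp add: field_simps)
      moreover have "X2*Y2+Y2*Y2+Y2*X2 = q" unfolding X2_def Y2_def using s2 by (simp add: field_simps; algebra)
      moreover have "X2 \<ge> 0" "Y2 \<ge> 0" unfolding X2_def Y2_def using s0 True by auto
      ultimately show ?thesis using B1[of X2 Y2] unfolding form_pqr r2_def by simp
    qed
    show ?thesis unfolding fpqr using interp[OF F2 F1 rr] .
  next
    case False
    have d4: "p^2 - 4*q \<ge> 0"
    proof -
      have "p^2 \<le> (2 * s)^2" using False p0 by (smt (verit) power_mono)
      then show ?thesis using s2 by (simp add: power_mult_distrib)
    qed
    define d where "d = sqrt (p^2 - 4*q)"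
    have d0: "d \<ge> 0" and d2: "d^2 = p^2 - 4*q" using d4 unfolding d_def by auto
    have dp: "d \<le> p"
    proof -
      have "d^2 \<le> p^2" using d2 p0 by simp
      then show ?thesis using power2_le_imp_le p0 by blast
    qed
    have F2: "GX x p q + 0 * HX x p q \<ge> 0"
    proof -
      have "0 + (p-d)/2 + (p+d)/2 = p" by (simp add: field_simps)
      moreover have "0*((p-d)/2) + (p-d)/2*((p+d)/2) + (p+d)/2*0 = q" using d2 by (simp add: field_simps; algebra)
      moreover have "(p-d)/2 \<ge> 0" "(p+d)/2 \<ge> 0" using d0 dp by auto
      ultimately show ?thesis using B2[of "(p+d)/2" "(p-d)/2"] unfolding form_pqr by simp
    qed
    show ?thesis unfolding fpqr using interp[OF F2 F1 p0(3) rr(2)] .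
  qed
qed



lemma sum5: "(\<Sum>i<(5::nat). f i) = f 0 + f 1 + f 2 + f 3 + (f 4 :: real)"
  by (simp add: numeral_eq_Suc)

lemma form_z11: "form_of x z 1 1 = x 0 * (z^5 - 2*z^2 - z + 2) + x 1 * (2*z^4 - 4*z^2 + 2)
   + x 2 * (2*z^3 - 2*z^2 - 2*z + 2) + x 3 * (z*(z-1)^2) + x 4 * (z*(2*z+1))"
  unfolding form_of_def sum5 by (simp add: sb_def Sn_def Tmn_def Smn_def U_def; algebra)

lemma form_0z1: "form_of x 0 z 1 = x 0 * (z^5 + 1) + x 1 * (z^4 + z) + x 2 * (z^3 + z^2)"
  unfolding form_of_def sum5 by (simp add: sb_def Sn_def Tmn_def Smn_def U_def)

lemma form_100: "form_of x 1 0 0 = x 0"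
  unfolding form_of_def sum5 by (simp add: sb_def Sn_def Tmn_def Smn_def U_def)

definition cw :: "real \<Rightarrow> real \<Rightarrow> nat \<Rightarrow> real" where
  "cw t w i = (if i = 0 then 1 else pB i t w)"

lemma eB_form: "eB t u = form_of (cw t (omega u))"
  unfolding eB_def form_of_def sum5 cw_def
  by (intro ext) (simp add: numeral_eq_Suc atLeastAtMostSuc_conv add.assoc)

definition Da :: "(nat \<Rightarrow> real) \<Rightarrow> real \<Rightarrow> real" where
  "Da x z = x 0 * (5*z^4 - 4*z - 1) + x 1 * (8*z^3 - 8*z) + x 2 * (6*z^2 - 4*z - 2)
     + x 3 * (3*z^2 - 4*z + 1) + x 4 * (4*z + 1)"
definition Db :: "(nat \<Rightarrow> real) \<Rightarrow> real \<Rightarrow> real" where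
  "Db x z = x 0 * (5*z^4) + x 1 * (4*z^3 + 1) + x 2 * (3*z^2 + 2*z)"
definition Dbb :: "(nat \<Rightarrow> real) \<Rightarrow> real \<Rightarrow> real" where
  "Dbb x z = x 0 * (20*z^3) + x 1 * (12*z^2) + x 2 * (6*z + 2)"

lemma Da_deriv: "((\<lambda>z. form_of x z 1 1) has_real_derivative Da x z) (at z)"
  unfolding form_z11 Da_def
  by (auto intro!: derivative_eq_intros simp: algebra_simps power2_eq_square)

lemma Db_deriv: "((\<lambda>z. form_of x 0 z 1) has_real_derivative Db x z) (at z)"
  unfolding form_0z1 Db_def
  by (auto intro!: derivative_eq_intros simp: algebra_simps power2_eq_square)

lemma Dbb_deriv: "((\<lambda>z. Db x z) has_real_derivative Dbb x z) (at z)"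
  unfolding Dbb_def Db_def
  by (auto intro!: derivative_eq_intros simp: algebra_simps power2_eq_square)



definition QQ :: "real \<Rightarrow> real \<Rightarrow> real \<Rightarrow> real" where
  "QQ t w z = t^2*(t+2)*z^3 + (2*t^4 - 4*t^3*w - 2*t^3 - 8*t^2*w - 12*t^2)*z^2
     + (t^4 - 2*t^3*w - 8*t^3 + 14*t^2*w + 16*t^2 - 5*t*w^2 - w^2)*z + (2*t+4)*w^2"

lemma pB12: "pB 1 t w = -2*w-3" "pB (Suc 0) t w = -2*w-3" "pB 2 t w = w^2+2*w+2"
  by (simp_all add: pB_def)

lemma pB_inv: "pB 3 t w = - (2*t^3 + 4*t^2 + 5*t + 1) * inverse (t^2) * inverse (t + 2) * w^2
        + 2 * (4*t^2 + 5*t + 3) * inverse (t + 2) * w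
        - (3*t^3 - 7*t^2 - 12*t - 8) * inverse (t + 2)"
   "pB 4 t w = (t - 1)^3 * (- (w^2) - 2 * t^2 * w + t^2 * (t - 2)) * inverse (t^2) * inverse (t + 2)"
  by (simp_all add: pB_def divide_inverse inverse_mult_distrib mult_ac)

lemma cw_z11: assumes "t > 0"
  shows "t^2*(t+2) * form_of (cw t w) z 1 1 = (z-t)^2 * QQ t w z"
proof -
  have y: "(t+2) * inverse (t+2) = 1" and v: "t^2 * inverse (t^2) = 1" using assms by auto
  show ?thesis unfolding form_z11 cw_def QQ_def
    apply (simp add: pB_inv pB12)
    using y v by algebra
qed

lemma QQ_nonneg:
  assumes t: "t \<ge> 2" and w: "w \<ge> 0" and g: "t^2*(t-2) - 2*t^2*w - w^2 \<ge> 0" and z: "z \<ge> 0"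
  shows "QQ t w z \<ge> 0"
proof -
  define k where "k = 2*(t+2)*z + t - 7"
  define g where "g = t^2*(t-2) - 2*t^2*w - w^2"
  define H where "H = (t+2)*z^2 + 2*(t-3)*(t+2)*z + (t-4)^2"
  have id1: "QQ t w z = (t+2)*(z-1)^2*(t^2*z + 2*w^2) + g*z*k"
    unfolding QQ_def g_def k_def by algebra
  have id2: "QQ t w z = t^2*z*H + 2*(t+2)*(z-1)^2*w^2 - 2*t^2*z*k*w - z*k*w^2"
    unfolding QQ_def H_def k_def by algebra
  show ?thesis
  proof (cases "k \<ge> 0")
    case True
    have "0 \<le> (t+2)*(z-1)^2*(t^2*z + 2*w^2)" using t z by simp
    moreover have "0 \<le> g*z*k" using g True z unfolding g_def by simp
    ultimately show ?thesis unfolding id1 by linarith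
  next
    case False
    have H0: "H \<ge> 0"
    proof (cases "t \<ge> 3")
      case True
      then show ?thesis unfolding H_def using z by simp
    next
      case False
      have e: "H = (t+2)*(z+t-3)^2 + (-(t-2)*(t^2-3*t-1))" unfolding H_def by algebra
      have "t*(t-3) \<le> 0" using False t by (simp add: mult_nonneg_nonpos)
      then have "t^2 - 3*t - 1 \<le> 0" by (simp add: algebra_simps power2_eq_square)
      then have "0 \<le> (2-t)*(t^2-3*t-1)" using t mult_nonpos_nonpos[of "2-t" "t^2-3*t-1"] by simp
      then have "0 \<le> -(t-2)*(t^2-3*t-1)" by simp
      moreover have "0 \<le> (t+2)*(z+t-3)^2" using t by simp
      ultimately show ?thesis unfolding e by linarith
    qed
    have "0 \<le> t^2*z*H" using H0 z by simp
    moreover have "0 \<le> 2*(t+2)*(z-1)^2*w^2" using t by simp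
    moreover have "0 \<le> - 2*t^2*z*k*w"
    proof -
      have "0 \<le> t^2*z*w" using z w by simp
      moreover have "0 \<le> -k" using False by simp
      ultimately have "0 \<le> (t^2*z*w)*(-k)" by (rule mult_nonneg_nonneg)
      then show ?thesis by (simp add: algebra_simps)
    qed
    moreover have "0 \<le> - z*k*w^2"
    proof -
      have "0 \<le> z*w^2" using z by simp
      moreover have "0 \<le> -k" using False by simp
      ultimately have "0 \<le> (z*w^2)*(-k)" by (rule mult_nonneg_nonneg)
      then show ?thesis by (simp add: algebra_simps)
    qed
    ultimately show ?thesis unfolding id2 by linarith
  qed
qed

lemma cw_0z1: "form_of (cw t w) 0 z 1 = (z+1)*(z^2-(w+2)*z+1)^2"
  unfolding form_0z1 cw_def by (simp add: pB12; algebra)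

lemma cw_nonneg:
  assumes t: "t \<ge> 2" and w: "w \<ge> 0" and g: "t^2*(t-2) - 2*t^2*w - w^2 \<ge> 0"
  shows "cw t w \<in> UNIV \<and> (\<forall>a b c. a \<ge> 0 \<longrightarrow> b \<ge> 0 \<longrightarrow> c \<ge> 0 \<longrightarrow> form_of (cw t w) a b c \<ge> 0)"
proof -
  have A1: "form_of (cw t w) z 1 1 \<ge> 0" if "z \<ge> 0" for z
  proof -
    have "0 \<le> (z-t)^2 * QQ t w z" using QQ_nonneg[OF t w g that] by simp
    then have "0 \<le> t^2*(t+2) * form_of (cw t w) z 1 1" using cw_z11[of t w z] t by simp
    moreover have "t^2*(t+2) > 0" using t by simp
    ultimately show ?thesis by (simp add: zero_le_mult_iff)
  qed
  have A2: "form_of (cw t w) 0 z 1 \<ge> 0" if "z \<ge> 0" for z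
    unfolding cw_0z1 using that by simp
  have A3: "form_of (cw t w) 1 0 0 \<ge> 0" unfolding form_100 cw_def by simp
  show ?thesis using test_set[OF A1 A2 A3] by auto
qed



lemma muR_ge2: assumes "t \<ge> 2" shows "muR t \<ge> 2"
proof -
  have "t^2 \<le> (t-1)*(t+2)" using assms by (simp add: algebra_simps power2_eq_square)
  then have "t \<le> sqrt ((t-1)*(t+2))" by (rule real_le_rsqrt)
  then have "t*t \<le> t * sqrt ((t-1)*(t+2))" using assms by (simp add: mult_left_mono)
  then show ?thesis unfolding muR_def by (simp add: power2_eq_square)
qed

lemma muB_props: assumes "t \<ge> 2"
  shows "muB t > 0" "muB t * (muR t - muB t) = 1"
proof -
  define m where "m = muR t"
  have m2: "m \<ge> 2" using muR_ge2[OF assms] unfolding m_def .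
  define r where "r = sqrt (m^2 - 4)"
  have "2*2 \<le> m*m" by (rule mult_mono) (use m2 in auto)
  then have m4: "m^2 - 4 \<ge> 0" by (simp add: power2_eq_square)
  have r0: "r \<ge> 0" and r2: "r^2 = m^2 - 4" using m4 unfolding r_def by auto
  have rm: "r < m"
  proof -
    have "r^2 < m^2" using r2 by simp
    then show ?thesis using r0 m2 by (smt (verit) power_mono)
  qed
  have mb: "muB t = (m - r)/2" unfolding muB_def m_def r_def ..
  show "muB t > 0" unfolding mb using rm by simp
  show "muB t * (muR t - muB t) = 1" unfolding mb m_def[symmetric]
    using r2 by (simp add: field_simps; algebra)
qed

lemma omega_nonneg: "u > 0 \<Longrightarrow> omega u \<ge> 0"
proof -
  assume u: "u > 0"
  have "omega u = (u-1)^2/u" unfolding omega_def using u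
    by (simp add: field_simps power2_eq_square)
  then show ?thesis using u by simp
qed

lemma omega_mono: assumes "0 < m" "m \<le> u" "u \<le> 1" shows "omega u \<le> omega m"
proof -
  have um: "u*m \<le> 1" using assms mult_mono[of u 1 m 1] by simp
  have pos: "u*m > 0" using assms by simp
  have "(u-m)/(u*m) \<ge> (u-m)/1" using assms um pos by (intro divide_left_mono) auto
  moreover have "1/m - 1/u = (u-m)/(u*m)" using assms by (simp add: field_simps)
  ultimately show ?thesis unfolding omega_def by simp
qed

lemma cond_g: assumes t: "t \<ge> 2" and u: "muB t \<le> u" "u \<le> 1"
  shows "u > 0" "omega u \<ge> 0" "t^2*(t-2) - 2*t^2*(omega u) - (omega u)^2 \<ge> 0"
proof -
  have mu0: "muB t > 0" and mu1: "muB t * (muR t - muB t) = 1" using muB_props[OF t] by auto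
  show u0: "u > 0" using mu0 u by simp
  show "omega u \<ge> 0" using omega_nonneg[OF u0] .
  have om: "omega (muB t) = muR t - 2"
  proof -
    have "1 / muB t = muR t - muB t" using mu1 mu0 by (simp add: field_simps)
    then show ?thesis unfolding omega_def by simp
  qed
  define w where "w = omega u"
  define rr where "rr = sqrt ((t-1)*(t+2))"
  have w0: "w \<ge> 0" using omega_nonneg[OF u0] unfolding w_def .
  have "w \<le> muR t - 2" using omega_mono[OF mu0 u] om unfolding w_def by simp
  then have "w + t^2 \<le> t * rr" unfolding muR_def rr_def by simp
  moreover have "0 \<le> w + t^2" using w0 by simp
  ultimately have "(w + t^2)^2 \<le> (t*rr)^2" by (rule power_mono)
  moreover have "rr^2 = (t-1)*(t+2)" unfolding rr_def using t by simp
  ultimately have "(w + t^2)^2 \<le> t^2*((t-1)*(t+2))" by (simp add: power_mult_distrib)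
  then show "t^2*(t-2) - 2*t^2*(omega u) - (omega u)^2 \<ge> 0" unfolding w_def[symmetric]
    by (simp add: algebra_simps power2_eq_square)
qed



definition nonneg :: "(nat \<Rightarrow> real) \<Rightarrow> bool" where
  "nonneg x \<longleftrightarrow> (\<forall>a b c. a \<ge> 0 \<longrightarrow> b \<ge> 0 \<longrightarrow> c \<ge> 0 \<longrightarrow> form_of x a b c \<ge> 0)"

lemma fermat_a: assumes "t > 0" "nonneg x" "form_of x t 1 1 = 0" shows "Da x t = 0"
proof (rule DERIV_local_min[OF Da_deriv])
  show "0 < t" by fact
  show "\<forall>y. \<bar>t - y\<bar> < t \<longrightarrow> form_of x t 1 1 \<le> form_of x y 1 1"
    using assms unfolding nonneg_def by auto
qed

lemma fermat_b: assumes "u > 0" "nonneg x" "form_of x 0 u 1 = 0" shows "Db x u = 0"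
proof (rule DERIV_local_min[OF Db_deriv])
  show "0 < u" by fact
  show "\<forall>y. \<bar>u - y\<bar> < u \<longrightarrow> form_of x 0 u 1 \<le> form_of x 0 y 1"
    using assms unfolding nonneg_def by auto
qed

lemma lin2:
  fixes A B C D d1 d2 :: real
  assumes "A*d1 + B*d2 = 0" "C*d1 + D*d2 = 0" "A*D - B*C \<noteq> 0"
  shows "d1 = 0 \<and> d2 = 0"
proof -
  have "d1*(A*D - B*C) = D*(A*d1 + B*d2) - B*(C*d1 + D*d2)" by algebra
  then have 1: "d1*(A*D - B*C) = 0" using assms by simp
  have "d2*(A*D - B*C) = A*(C*d1 + D*d2) - C*(A*d1 + B*d2)" by algebra
  then have 2: "d2*(A*D - B*C) = 0" using assms by simp
  show ?thesis using 1 2 assms(3) by simp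
qed

lemma form_scale:
  assumes "y 0 = 1" "x 1 = x 0 * y 1" "x 2 = x 0 * y 2" "x 3 = x 0 * y 3" "x 4 = x 0 * y 4"
  shows "form_of x a b c = x 0 * form_of y a b c"
  unfolding form_of_def sum5 using assms by (simp add: algebra_simps)

lemma cw_I1: assumes "t > 0" shows "form_of (cw t w) t 1 1 = 0"
  using cw_z11[OF assms, of w t] assms by simp

lemma cw_I2: assumes "t > 0" shows "Da (cw t w) t = 0"
proof -
  have y: "(t+2) * inverse (t+2) = 1" and v: "t^2 * inverse (t^2) = 1" using assms by auto
  have "t^2*(t+2) * Da (cw t w) t = 0" unfolding Da_def cw_def
    apply (simp add: pB_inv pB12)
    using y v by algebra
  then show ?thesis using assms by simp
qed

lemma cw_I3: assumes "u > 0" shows "form_of (cw t (omega u)) 0 u 1 = 0"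
proof -
  have "u^2 - (omega u + 2)*u + 1 = 0" unfolding omega_def using assms
    by (simp add: field_simps power2_eq_square)
  then show ?thesis unfolding cw_0z1 by simp
qed

lemma cw_I4: assumes "u > 0" shows "Db (cw t (omega u)) u = 0"
proof -
  define w where "w = omega u"
  have e: "u^2 - (w + 2)*u + 1 = 0" unfolding w_def omega_def using assms
    by (simp add: field_simps power2_eq_square)
  have "Db (cw t w) u = (u^2-(w+2)*u+1)^2 + 2*(u+1)*(u^2-(w+2)*u+1)*(2*u-(w+2))"
    unfolding Db_def cw_def by (simp add: pB12; algebra)
  then show ?thesis unfolding w_def[symmetric] e by simp
qed

lemma step_t:
  assumes t: "t \<ge> 2" and y0: "y 0 = 1"
    and I1: "form_of y t 1 1 = 0" and I2: "Da y t = 0"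
    and E1: "form_of x t 1 1 = 0" and E2: "Da x t = 0"
    and x1: "x 1 = x 0 * y 1" and x2: "x 2 = x 0 * y 2"
  shows "x 3 = x 0 * y 3 \<and> x 4 = x 0 * y 4"
proof -
  have a: "(t*(t-1)^2)*(x 3 - x 0 * y 3) + (t*(2*t+1))*(x 4 - x 0 * y 4) = 0"
  proof -
    have "(t*(t-1)^2)*(x 3 - x 0 * y 3) + (t*(2*t+1))*(x 4 - x 0 * y 4)
       = form_of x t 1 1 - x 0 * form_of y t 1 1"
      unfolding form_z11 using x1 x2 y0 by algebra
    then show ?thesis using I1 E1 by simp
  qed
  have b: "(3*t^2-4*t+1)*(x 3 - x 0 * y 3) + (4*t+1)*(x 4 - x 0 * y 4) = 0"
  proof -
    have "(3*t^2-4*t+1)*(x 3 - x 0 * y 3) + (4*t+1)*(x 4 - x 0 * y 4)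
       = Da x t - x 0 * Da y t"
      unfolding Da_def using x1 x2 y0 by algebra
    then show ?thesis using I2 E2 by simp
  qed
  have det: "(t*(t-1)^2)*(4*t+1) - (t*(2*t+1))*(3*t^2-4*t+1) = -2*t^2*(t-1)*(t+2)" by algebra
  have "-2*t^2*(t-1)*(t+2) \<noteq> 0" using t by simp
  then show ?thesis using lin2[OF a b] det by simp
qed

lemma core2:
  assumes t: "t \<ge> 2" and u: "0 < u" "u < 1" and nn: "nonneg x"
    and E1: "form_of x t 1 1 = 0" and E3: "form_of x 0 u 1 = 0" and E4: "Db x u = 0"
  shows "\<forall>a b c. form_of x a b c = x 0 * form_of (cw t (omega u)) a b c"
proof -
  define y where "y = cw t (omega u)"
  have y0: "y 0 = 1" unfolding y_def cw_def by simp
  have t0: "t > 0" using t by simp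
  have E2: "Da x t = 0" by (rule fermat_a[OF t0 nn E1])
  have I3: "form_of y 0 u 1 = 0" unfolding y_def by (rule cw_I3[OF u(1)])
  have I4: "Db y u = 0" unfolding y_def by (rule cw_I4[OF u(1)])
  have a: "(u^4+u)*(x 1 - x 0 * y 1) + (u^3+u^2)*(x 2 - x 0 * y 2) = 0"
  proof -
    have "(u^4+u)*(x 1 - x 0 * y 1) + (u^3+u^2)*(x 2 - x 0 * y 2)
       = form_of x 0 u 1 - x 0 * form_of y 0 u 1"
      unfolding form_0z1 using y0 by algebra
    then show ?thesis using I3 E3 by simp
  qed
  have b: "(4*u^3+1)*(x 1 - x 0 * y 1) + (3*u^2+2*u)*(x 2 - x 0 * y 2) = 0"
  proof -
    have "(4*u^3+1)*(x 1 - x 0 * y 1) + (3*u^2+2*u)*(x 2 - x 0 * y 2)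
       = Db x u - x 0 * Db y u"
      unfolding Db_def using y0 by algebra
    then show ?thesis using I4 E4 by simp
  qed
  have det: "(u^4+u)*(3*u^2+2*u) - (u^3+u^2)*(4*u^3+1) = - (u^2*(u-1)*(u+1)^3)" by algebra
  have "- (u^2*(u-1)*(u+1)^3) \<noteq> 0" using u by simp
  then have d12: "x 1 = x 0 * y 1 \<and> x 2 = x 0 * y 2" using lin2[OF a b] det by simp
  have I1: "form_of y t 1 1 = 0" unfolding y_def by (rule cw_I1[OF t0])
  have I2: "Da y t = 0" unfolding y_def by (rule cw_I2[OF t0])
  have "x 3 = x 0 * y 3 \<and> x 4 = x 0 * y 4" using step_t[OF t y0 I1 I2 E1 E2] d12 by simp
  then show ?thesis using form_scale[where y=y and x=x, OF y0] d12 unfolding y_def by auto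
qed

lemma core3:
  assumes t: "t \<ge> 2" and nn: "nonneg x"
    and E1: "form_of x t 1 1 = 0" and E3: "form_of x 0 1 1 = 0" and E4: "Dbb x 1 = 0"
  shows "\<forall>a b c. form_of x a b c = x 0 * form_of (cw t 0) a b c"
proof -
  define y where "y = cw t 0"
  have y0: "y 0 = 1" unfolding y_def cw_def by simp
  have y12: "y 1 = -3" "y 2 = 2" unfolding y_def cw_def by (simp_all add: pB12)
  have t0: "t > 0" using t by simp
  have E2: "Da x t = 0" by (rule fermat_a[OF t0 nn E1])
  have "2*x 0 + 2*x 1 + 2*x 2 = 0" using E3 unfolding form_0z1 by simp
  moreover have "20*x 0 + 12*x 1 + 8*x 2 = 0" using E4 unfolding Dbb_def by simp
  ultimately have d12: "x 1 = x 0 * y 1 \<and> x 2 = x 0 * y 2" unfolding y12 by linarith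
  have I1: "form_of y t 1 1 = 0" unfolding y_def by (rule cw_I1[OF t0])
  have I2: "Da y t = 0" unfolding y_def by (rule cw_I2[OF t0])
  have "x 3 = x 0 * y 3 \<and> x 4 = x 0 * y 4" using step_t[OF t y0 I1 I2 E1 E2] d12 by simp
  then show ?thesis using form_scale[where y=y and x=x, OF y0] d12 unfolding y_def by auto
qed



lemma P35_E: "f \<in> P35 \<Longrightarrow> \<exists>x. f = form_of x \<and> nonneg x"
  unfolding P35_def H35_def nonneg_def by auto

lemma eB_P35: assumes t: "t \<ge> 2" and u: "muB t \<le> u" "u \<le> 1" shows "eB t u \<in> P35"
proof -
  have "cw t (omega u) \<in> UNIV \<and> (\<forall>a b c. a \<ge> 0 \<longrightarrow> b \<ge> 0 \<longrightarrow> c \<ge> 0 \<longrightarrow> form_of (cw t (omega u)) a b c \<ge> 0)"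
    using cw_nonneg[OF t cond_g(2)[OF t u] cond_g(3)[OF t u]] .
  then show ?thesis unfolding P35_def H35_def eB_form by auto
qed

lemma eB_100: "eB t u 1 0 0 = 1"
  unfolding eB_form form_100 cw_def by simp

lemma kappa:
  assumes ng: "nonneg xg" and nh: "nonneg xh"
    and sum: "\<And>a b c. form_of (cw t 0) a b c = form_of xg a b c + form_of xh a b c"
    and g1: "form_of xg 0 1 1 = 0"
  shows "Dbb xg 1 = 0"
proof -
  define k where "k = 3 * xg 0 + xg 1"
  have x2: "xg 2 = - xg 0 - xg 1" using g1 unfolding form_0z1 by simp
  define K where "K = (\<lambda>b::real. xg 0 * (b-1)^2 + k*b)"
  have G: "form_of xg 0 b 1 = (b-1)^2*(b+1)*K b" for b
    unfolding form_0z1 K_def k_def x2 by algebra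
  have bnd: "0 \<le> K b \<and> K b - (b-1)^2 \<le> 0" if b: "b > 0" "b \<noteq> 1" for b
  proof -
    have pos: "(b-1)^2*(b+1) > 0" using b by simp
    have "0 \<le> form_of xg 0 b 1" using ng b unfolding nonneg_def by auto
    then have 1: "0 \<le> K b" using pos unfolding G by (simp add: zero_le_mult_iff)
    have "0 \<le> form_of xh 0 b 1" using nh b unfolding nonneg_def by auto
    then have "form_of xg 0 b 1 \<le> form_of (cw t 0) 0 b 1" using sum[of 0 b 1] by simp
    also have "\<dots> = (b-1)^2*(b+1)*(b-1)^2" unfolding cw_0z1 by algebra
    finally have "(b-1)^2*(b+1)*K b \<le> (b-1)^2*(b+1)*(b-1)^2" unfolding G .
    then have "K b \<le> (b-1)^2" using pos mult_left_le_imp_le by blast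
    then show ?thesis using 1 by simp
  qed
  have ev: "eventually (\<lambda>b. 0 \<le> K b \<and> K b - (b-1)^2 \<le> 0) (at (1::real))"
    unfolding eventually_at
  proof (rule exI[of _ 1], intro conjI ballI impI)
    show "(0::real) < 1" by simp
    fix b :: real assume "b \<noteq> 1 \<and> dist b 1 < 1"
    then have "b > 0" "b \<noteq> 1" by (auto simp: dist_real_def)
    then show "0 \<le> K b" "K b - (b-1)^2 \<le> 0" using bnd by auto
  qed
  have l1: "(K \<longlongrightarrow> k) (at 1)"
  proof -
    have "((\<lambda>b. xg 0 * (b-1)^2 + k*b) \<longlongrightarrow> xg 0 * (1-1)^2 + k*1) (at (1::real))"
      by (intro tendsto_intros)
    then show ?thesis unfolding K_def by simp
  qed
  have l2: "((\<lambda>b. K b - (b-1)^2) \<longlongrightarrow> k) (at 1)"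
  proof -
    have "((\<lambda>b. K b - (b-1)^2) \<longlongrightarrow> k - (1-1)^2) (at (1::real))"
      by (intro tendsto_intros l1)
    then show ?thesis by simp
  qed
  have "0 \<le> k" by (rule tendsto_lowerbound[OF l1]) (use ev in \<open>auto elim: eventually_mono\<close>)
  moreover have "k \<le> 0" by (rule tendsto_upperbound[OF l2]) (use ev in \<open>auto elim: eventually_mono\<close>)
  ultimately have "k = 0" by simp
  then show ?thesis unfolding Dbb_def x2 k_def by simp
qed

lemma part2:
  assumes t: "t \<ge> 2" and u: "muB t \<le> u" "u < 1" and f: "f \<in> P35"
    and E1: "f t 1 1 = 0" and E3: "f 0 u 1 = 0" and E4: "deriv (\<lambda>b. f 0 b 1) u = 0"
  shows "\<exists>l\<ge>0. f = scal l (eB t u)"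
proof -
  obtain x where fx: "f = form_of x" and nn: "nonneg x" using P35_E[OF f] by blast
  have u0: "u > 0" using cond_g(1)[OF t u(1)] u by simp
  have "Db x u = 0" using E4 DERIV_imp_deriv[OF Db_deriv[of x u]] unfolding fx by simp
  then have all: "\<forall>a b c. form_of x a b c = x 0 * form_of (cw t (omega u)) a b c"
    using core2[OF t u0 u(2) nn] E1 E3 unfolding fx by simp
  have "0 \<le> form_of x 1 0 0" using nn unfolding nonneg_def by simp
  then have "x 0 \<ge> 0" using form_100[of x] by simp
  moreover have "f = scal (x 0) (eB t u)" unfolding fx scal_def eB_form using all by (intro ext) simp
  ultimately show ?thesis by blast
qed

lemma part3:
  assumes t: "t \<ge> 2" and f: "f \<in> P35"
    and E1: "f t 1 1 = 0" and E3: "f 0 1 1 = 0" and E4: "deriv (deriv (\<lambda>b. f 0 b 1)) 1 = 0"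
  shows "\<exists>l\<ge>0. f = scal l (eB t 1)"
proof -
  obtain x where fx: "f = form_of x" and nn: "nonneg x" using P35_E[OF f] by blast
  have d1: "deriv (\<lambda>b. form_of x 0 b 1) = Db x"
    using DERIV_imp_deriv[OF Db_deriv[of x]] by (intro ext) simp
  have "Dbb x 1 = 0" using E4 DERIV_imp_deriv[OF Dbb_deriv[of x 1]] unfolding fx d1 by simp
  then have all: "\<forall>a b c. form_of x a b c = x 0 * form_of (cw t 0) a b c"
    using core3[OF t nn] E1 E3 unfolding fx by simp
  have om: "omega 1 = 0" unfolding omega_def by simp
  have "0 \<le> form_of x 1 0 0" using nn unfolding nonneg_def by simp
  then have "x 0 \<ge> 0" using form_100[of x] by simp
  moreover have "f = scal (x 0) (eB t 1)" unfolding fx scal_def eB_form om using all by (intro ext) simp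
  ultimately show ?thesis by blast
qed

lemma ext_half:
  assumes t: "t \<ge> 2" and u: "muB t \<le> u" "u \<le> 1" and g: "g \<in> P35" and h: "h \<in> P35"
    and s: "eB t u = (\<lambda>a b c. g a b c + h a b c)"
  shows "\<exists>l\<ge>0. g = scal l (eB t u)"
proof -
  obtain xg where gx: "g = form_of xg" and ng: "nonneg xg" using P35_E[OF g] by blast
  obtain xh where hx: "h = form_of xh" and nh: "nonneg xh" using P35_E[OF h] by blast
  have u0: "u > 0" using cond_g(1)[OF t u] .
  have t0: "t > 0" using t by simp
  have sm: "eB t u a b c = form_of xg a b c + form_of xh a b c" for a b c
    using s unfolding gx hx by metis
  have zero: "form_of xg a b c = 0" if "eB t u a b c = 0" "a \<ge> 0" "b \<ge> 0" "c \<ge> 0" for a b c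
  proof -
    have "0 \<le> form_of xg a b c" "0 \<le> form_of xh a b c"
      using ng nh that unfolding nonneg_def by auto
    then show ?thesis using sm[of a b c] that by simp
  qed
  have E1: "g t 1 1 = 0" unfolding gx
    by (rule zero) (use t0 cw_I1[OF t0] in \<open>auto simp: eB_form\<close>)
  have E3: "g 0 u 1 = 0" unfolding gx
    by (rule zero) (use u0 cw_I3[OF u0] in \<open>auto simp: eB_form\<close>)
  show ?thesis
  proof (cases "u < 1")
    case True
    have "Db xg u = 0" using fermat_b[OF u0 ng] E3 unfolding gx by simp
    then have "deriv (\<lambda>b. g 0 b 1) u = 0"
      using DERIV_imp_deriv[OF Db_deriv[of xg u]] unfolding gx by simp
    then show ?thesis using part2[OF t u(1) True g E1 E3] by blast
  next
    case False
    then have u1: "u = 1" using u by simp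
    have om: "omega 1 = 0" unfolding omega_def by simp
    have sum: "form_of (cw t 0) a b c = form_of xg a b c + form_of xh a b c" for a b c
      using sm[of a b c] unfolding eB_form u1 om .
    have g1: "form_of xg 0 1 1 = 0" using E3 unfolding gx u1 .
    have "Dbb xg 1 = 0" by (rule kappa[OF ng nh sum g1])
    moreover have d1: "deriv (\<lambda>b. form_of xg 0 b 1) = Db xg"
      using DERIV_imp_deriv[OF Db_deriv[of xg]] by (intro ext) simp
    ultimately have "deriv (deriv (\<lambda>b. g 0 b 1)) 1 = 0"
      using DERIV_imp_deriv[OF Dbb_deriv[of xg 1]] unfolding gx d1 by simp
    then show ?thesis using part3[OF t g E1] E3 unfolding u1 by blast
  qed
qed

lemma part1:
  assumes t: "t \<ge> 2" and u: "muB t \<le> u" "u \<le> 1"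
  shows "extremal P35 (eB t u)"
  unfolding extremal_def
proof (intro conjI allI impI)
  show "eB t u \<in> P35" by (rule eB_P35[OF t u])
  show "eB t u \<noteq> (\<lambda>a b c. 0)"
  proof
    assume "eB t u = (\<lambda>a b c. 0)"
    then have "eB t u 1 0 0 = 0" by simp
    then show False using eB_100 by simp
  qed
  fix g h assume g: "g \<in> P35" and h: "h \<in> P35" and s: "eB t u = (\<lambda>a b c. g a b c + h a b c)"
  show "\<exists>l\<ge>0. g = scal l (eB t u)" by (rule ext_half[OF t u g h s])
  have s': "eB t u = (\<lambda>a b c. h a b c + g a b c)" using s by (simp add: add.commute)
  show "\<exists>l\<ge>0. h = scal l (eB t u)" by (rule ext_half[OF t u h g s'])
qed

lemma part4: "eB 2 1 = eC 2"
proof (intro ext)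
  fix a b c
  have om: "omega 1 = 0" unfolding omega_def by simp
  have p: "pB (Suc (Suc 0)) 2 0 = 2" "pB (Suc (Suc (Suc 0))) 2 0 = 9" "pB (Suc (Suc (Suc (Suc 0)))) 2 0 = 0"
    by (simp_all add: pB_def)
  show "eB 2 1 a b c = eC 2 a b c"
    unfolding eB_def eC_def om by (simp add: numeral_eq_Suc atLeastAtMostSuc_conv pB12 p)
qed


theorem theorem4p10:
  shows "(\<forall>t u. t \<ge> 2 \<longrightarrow> muB t \<le> u \<longrightarrow> u \<le> 1 \<longrightarrow> extremal P35 (eB t u))
    \<and> (\<forall>t u f. t \<ge> 2 \<longrightarrow> muB t \<le> u \<longrightarrow> u < 1 \<longrightarrow> f \<in> P35 \<longrightarrow>
          f t 1 1 = 0 \<longrightarrow> f 0 u 1 = 0 \<longrightarrow> deriv (\<lambda>b. f 0 b 1) u = 0 \<longrightarrow>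
          (\<exists>l\<ge>0. f = scal l (eB t u)))
    \<and> (\<forall>t f. t \<ge> 2 \<longrightarrow> f \<in> P35 \<longrightarrow>
          f t 1 1 = 0 \<longrightarrow> f 0 1 1 = 0 \<longrightarrow> deriv (deriv (\<lambda>b. f 0 b 1)) 1 = 0 \<longrightarrow>
          (\<exists>l\<ge>0. f = scal l (eB t 1)))
    \<and> eB 2 1 = eC 2"
  using part1 part2 part3 part4 by blast

end
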